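(* Let $n\ge 1$ and consider a bin $B=(l_s,u_s]\times(l_t,u_t]\subseteq[0,n]^2$ with $l_s<u_s$, $l_t<u_t$, containing $o_i\ge 1$ observed rank pairs $(s_{i1},t_{i1}),\dots,(s_{io_i},t_{io_i})\in B$. Let $e_i=(u_s-l_s)(u_t-l_t)/n$ be its expected count. For a vertical split at $c\in(l_s,u_s)$, let $o_{i-}(c)=\#\{k: s_{ik}\le c\}$, $o_{i+}(c)=o_i-o_{i-}(c)$, $e_{i-}(c)=(c-l_s)(u_t-l_t)/n$ and $e_{i+}(c)=(u_s-c)(u_t-l_t)/n$. With the mi score $\mathrm{mi}(o,e)=\frac{o}{n}\log\frac{o}{e}$ (with the convention $0\log 0=0$), define $$\delta_i(c,\mathrm{mi})=\mathrm{mi}\big(o_{i+}(c),e_{i+}(c)\big)+\mathrm{mi}\big(o_{i-}(c),e_{i-}(c)\big)-\mathrm{mi}(o_i,e_i).$$ Then any $c^*\in(l_s,u_s)$ maximizing $\delta_i(c,\mathrm{mi})$ over $c\in(l_s,u_s)$ is one of the point coordinates $s_{i1},\dots,s_{io_i}$. The analogous statement holds for horizontal splits at $c\in(l_t,u_t)$ (with the roles of $s$ and $t$ interchanged), where the maximizer is one of $t_{i1},\dots,t_{io_i}$.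
   Context: Observations $(x_k,y_k)$, $k=1,\dots,n$, are converted to marginal ranks $s_k,t_k\in\{1,\dots,n\}$ (ties broken randomly), so under independence the rank pairs are uniform on the rank space $[0,n]^2$ and the expected number of points in a region of area $a$ is $a/n$. A bin is a rectangle $(l_s,u_s]\times(l_t,u_t]$; splitting it by a vertical line at $c$ produces a lower bin $(l_s,c]\times(l_t,u_t]$ and an upper bin $(c,u_s]\times(l_t,u_t]$ (a point with coordinate equal to $c$ is counted in the lower bin); horizontal splits are defined analogously in the $t$ coordinate. *)

theory Defs
  imports Complex_Main
begin

definition mi :: "nat \<Rightarrow> nat \<Rightarrow> real \<Rightarrow> real" where
  "mi n oc e = (if oc = 0 then 0 else real oc / real n * ln (real oc / e))"

text \<open>Gain of a vertical split at c of the bin (ls,us] x (lt,ut] containing the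
  points with first rank coordinates s 0, ..., s (oi-1).  Points with coordinate
  equal to c are counted in the lower bin.\<close>
definition delta_v ::
  "nat \<Rightarrow> nat \<Rightarrow> (nat \<Rightarrow> nat) \<Rightarrow> real \<Rightarrow> real \<Rightarrow> real \<Rightarrow> real \<Rightarrow> real \<Rightarrow> real" where
  "delta_v n oi s ls us lt ut c =
     (let om = card {k. k < oi \<and> real (s k) \<le> c};
          op = oi - om;
          em = (c - ls) * (ut - lt) / real n;
          ep = (us - c) * (ut - lt) / real n;
          ei = (us - ls) * (ut - lt) / real n
      in mi n op ep + mi n om em - mi n oi ei)"

definition delta_h ::
  "nat \<Rightarrow> nat \<Rightarrow> (nat \<Rightarrow> nat) \<Rightarrow> real \<Rightarrow> real \<Rightarrow> real \<Rightarrow> real \<Rightarrow> real \<Rightarrow> real" where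
  "delta_h n oi t ls us lt ut c =
     (let om = card {k. k < oi \<and> real (t k) \<le> c};
          op = oi - om;
          em = (c - lt) * (us - ls) / real n;
          ep = (ut - c) * (us - ls) / real n;
          ei = (us - ls) * (ut - lt) / real n
      in mi n op ep + mi n om em - mi n oi ei)"

end

theory Submission
  imports Defs
begin

lemma mi_conv:
  fixes y h D :: real
  assumes n: "n \<ge> 1" and h: "0 < h" "h < y" and D: "0 < D"
  shows "mi n oc ((y-h)*D/real n) + mi n oc ((y+h)*D/real n) \<ge> 2 * mi n oc (y*D/real n)"
    and "oc > 0 \<Longrightarrow> mi n oc ((y-h)*D/real n) + mi n oc ((y+h)*D/real n) > 2 * mi n oc (y*D/real n)"
proof -
  have np: "real n > 0" using n by simp
  define e1 where "e1 = (y-h)*D/real n"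
  define e2 where "e2 = (y+h)*D/real n"
  define e where "e = y*D/real n"
  have p1: "e1 > 0" "e2 > 0" "e > 0" unfolding e1_def e2_def e_def using h D np by auto
  have prod: "e1 * e2 < e * e"
  proof -
    have "e1 * e2 = (y*y - h*h) * (D*D) / (real n * real n)" unfolding e1_def e2_def
      by (simp add: field_simps)
    also have "... < (y*y) * (D*D) / (real n * real n)"
      using h D np by (intro divide_strict_right_mono mult_strict_right_mono) auto
    also have "... = e * e" unfolding e_def by (simp add: field_simps)
    finally show ?thesis .
  qed
  have lnineq: "ln e1 + ln e2 < 2 * ln e"
  proof -
    have "ln e1 + ln e2 = ln (e1*e2)" using p1 by (simp add: ln_mult)
    also have "... < ln (e*e)" using prod p1 by simp
    also have "... = 2 * ln e" using p1 by (simp add: ln_mult)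
    finally show ?thesis .
  qed
  have strict: "mi n oc e1 + mi n oc e2 > 2 * mi n oc e" if "oc > 0"
  proof -
    have o: "real oc > 0" using that by simp
    have mx: "mi n oc x = real oc / real n * (ln (real oc) - ln x)" if "x > 0" for x
      using that o by (simp add: mi_def ln_div)
    have "mi n oc e1 + mi n oc e2 = real oc / real n * (2 * ln (real oc) - (ln e1 + ln e2))"
      using p1 by (simp add: mx algebra_simps add_divide_distrib)
    moreover have "2 * mi n oc e = real oc / real n * (2 * ln (real oc) - 2 * ln e)"
      using that p1 o by (simp add: mi_def ln_div field_simps)
    moreover have "real oc / real n > 0" using o np by simp
    moreover have "real oc / real n * (2 * ln (real oc) - 2 * ln e) < real oc / real n * (2 * ln (real oc) - (ln e1 + ln e2))"
      using lnineq \<open>real oc / real n > 0\<close> by (intro mult_strict_left_mono) auto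
    ultimately show ?thesis by simp
  qed
  show "mi n oc ((y-h)*D/real n) + mi n oc ((y+h)*D/real n) \<ge> 2 * mi n oc (y*D/real n)"
  proof (cases "oc = 0")
    case True then show ?thesis by (simp add: mi_def)
  next
    case False then show ?thesis using strict unfolding e1_def e2_def e_def by fastforce
  qed
  show "oc > 0 \<Longrightarrow> mi n oc ((y-h)*D/real n) + mi n oc ((y+h)*D/real n) > 2 * mi n oc (y*D/real n)"
    using strict unfolding e1_def e2_def e_def by fastforce
qed

lemma generic:
  fixes a :: "nat \<Rightarrow> real" and ls us D c C :: real
  assumes n: "n \<ge> 1" and D: "0 < D" and oi: "oi \<ge> 1"
    and c: "ls < c" "c < us" and na: "\<forall>k<oi. c \<noteq> a k"
  defines "F \<equiv> \<lambda>x. mi n (oi - card {k. k < oi \<and> a k \<le> x}) ((us - x) * D / real n)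
                 + mi n (card {k. k < oi \<and> a k \<le> x}) ((x - ls) * D / real n) - C"
  shows "\<exists>c'\<in>{ls<..<us}. F c' > F c"
proof -
  define M where "M = Min ({c-ls, us-c} \<union> (\<lambda>k. \<bar>a k - c\<bar>) ` {..<oi})"
  have fin: "finite ({c-ls, us-c} \<union> (\<lambda>k. \<bar>a k - c\<bar>) ` {..<oi})" by simp
  have Mpos: "M > 0" unfolding M_def using fin c na
    by (subst Min_gr_iff) auto
  have M1: "M \<le> c - ls" "M \<le> us - c" unfolding M_def using fin by (meson Min_le UnI1 insertI1 insertI2 singletonI)+
  have M2: "M \<le> \<bar>a k - c\<bar>" if "k < oi" for k
  proof -
    have "\<bar>a k - c\<bar> \<in> {c-ls, us-c} \<union> (\<lambda>k. \<bar>a k - c\<bar>) ` {..<oi}" using that by auto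
    then show ?thesis unfolding M_def using fin by (meson Min_le)
  qed
  define h where "h = M/2"
  have h: "0 < h" "h < c - ls" "h < us - c" using Mpos M1 unfolding h_def by auto
  have eqm: "{k. k < oi \<and> a k \<le> c - h} = {k. k < oi \<and> a k \<le> c}"
    using M2 h unfolding h_def by (force simp: abs_if split: if_splits)
  have eqp: "{k. k < oi \<and> a k \<le> c + h} = {k. k < oi \<and> a k \<le> c}"
    using M2 h unfolding h_def by (force simp: abs_if split: if_splits)
  define m where "m = card {k. k < oi \<and> a k \<le> c}"
  have mle: "m \<le> oi" unfolding m_def
    by (rule order.trans[OF card_mono[of "{..<oi}"]]) auto
  have Fm: "F (c-h) = mi n (oi - m) (((us - c) + h) * D / real n) + mi n m (((c - ls) - h) * D / real n) - C"
    unfolding F_def eqm m_def by (simp add: algebra_simps)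
  have Fp: "F (c+h) = mi n (oi - m) (((us - c) - h) * D / real n) + mi n m (((c - ls) + h) * D / real n) - C"
    unfolding F_def eqp m_def by (simp add: algebra_simps)
  have F0: "F c = mi n (oi - m) ((us - c) * D / real n) + mi n m ((c - ls) * D / real n) - C"
    unfolding F_def m_def by simp
  have A1: "mi n (oi - m) (((us - c) - h) * D / real n) + mi n (oi - m) (((us - c) + h) * D / real n) \<ge> 2 * mi n (oi - m) ((us - c) * D / real n)"
    by (rule mi_conv(1)) (use n h D in auto)
  have A2: "oi - m > 0 \<Longrightarrow> mi n (oi - m) (((us - c) - h) * D / real n) + mi n (oi - m) (((us - c) + h) * D / real n) > 2 * mi n (oi - m) ((us - c) * D / real n)"
    by (rule mi_conv(2)) (use n h D in auto)
  have B1: "mi n m (((c - ls) - h) * D / real n) + mi n m (((c - ls) + h) * D / real n) \<ge> 2 * mi n m ((c - ls) * D / real n)"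
    by (rule mi_conv(1)) (use n h D in auto)
  have B2: "m > 0 \<Longrightarrow> mi n m (((c - ls) - h) * D / real n) + mi n m (((c - ls) + h) * D / real n) > 2 * mi n m ((c - ls) * D / real n)"
    by (rule mi_conv(2)) (use n h D in auto)
  have "oi - m > 0 \<or> m > 0" using oi by auto
  then have "F (c-h) + F (c+h) > 2 * F c" unfolding Fm Fp F0 using A1 A2 B1 B2 by auto
  then have "F (c-h) > F c \<or> F (c+h) > F c" by linarith
  moreover have "c - h \<in> {ls<..<us}" "c + h \<in> {ls<..<us}" using h by auto
  ultimately show ?thesis by blast
qed

theorem proposition2:
  fixes n oi :: nat and s t :: "nat \<Rightarrow> nat" and ls us lt ut :: real
  assumes "n \<ge> 1"
    and "0 \<le> ls" and "ls < us" and "us \<le> real n"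
    and "0 \<le> lt" and "lt < ut" and "ut \<le> real n"
    and "oi \<ge> 1"
    and "\<forall>k<oi. s k \<in> {1..n} \<and> t k \<in> {1..n}"
    and "\<forall>k<oi. ls < real (s k) \<and> real (s k) \<le> us \<and> lt < real (t k) \<and> real (t k) \<le> ut"
  shows "(\<forall>c\<in>{ls<..<us}. (\<forall>c'\<in>{ls<..<us}. delta_v n oi s ls us lt ut c' \<le> delta_v n oi s ls us lt ut c)
            \<longrightarrow> (\<exists>k<oi. c = real (s k)))
       \<and> (\<forall>c\<in>{lt<..<ut}. (\<forall>c'\<in>{lt<..<ut}. delta_h n oi t ls us lt ut c' \<le> delta_h n oi t ls us lt ut c)
            \<longrightarrow> (\<exists>k<oi. c = real (t k)))"
proof (intro conjI ballI impI)
  fix c assume c: "c \<in> {ls<..<us}" and mx: "\<forall>c'\<in>{ls<..<us}. delta_v n oi s ls us lt ut c' \<le> delta_v n oi s ls us lt ut c"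
  show "\<exists>k<oi. c = real (s k)"
  proof (rule ccontr)
    assume "\<not> ?thesis"
    then have na: "\<forall>k<oi. c \<noteq> (\<lambda>k. real (s k)) k" by auto
    obtain c' where "c' \<in> {ls<..<us}" and "delta_v n oi s ls us lt ut c' > delta_v n oi s ls us lt ut c"
      using generic[OF assms(1) _ assms(8) _ _ na, of "ut - lt" ls us "mi n oi ((us - ls) * (ut - lt) / real n)"]
        c assms(6) unfolding delta_v_def Let_def by auto
    then show False using mx by force
  qed
next
  fix c assume c: "c \<in> {lt<..<ut}" and mx: "\<forall>c'\<in>{lt<..<ut}. delta_h n oi t ls us lt ut c' \<le> delta_h n oi t ls us lt ut c"
  show "\<exists>k<oi. c = real (t k)"
  proof (rule ccontr)
    assume "\<not> ?thesis"
    then have na: "\<forall>k<oi. c \<noteq> (\<lambda>k. real (t k)) k" by auto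
    obtain c' where "c' \<in> {lt<..<ut}" and "delta_h n oi t ls us lt ut c' > delta_h n oi t ls us lt ut c"
      using generic[OF assms(1) _ assms(8) _ _ na, of "us - ls" lt ut "mi n oi ((us - ls) * (ut - lt) / real n)"]
        c assms(3) unfolding delta_h_def Let_def by auto
    then show False using mx by force
  qed
qed

end
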